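(* Let $m,k\in\mathbb{N}$ and let $\beta\in\mathbb{C}$ with $\beta,\ 2\beta+2m+2k+1\notin\mathbb{Z}_0^-$. Then \[ {}_3F_2\left[\begin{array}{r} -2m,\ 1+2m,\ \beta;\\ -2m-2k,\ 2\beta+2m+2k+1;\end{array}1\right]_{2m}=\frac{(1+2\beta+2k)_{2m}\left(1+k\right)_{2m}}{(1+2k)_{2m}\left(1+\beta+k\right)_{2m}}. \]
   Context: $\mathbb{N}=\{1,2,3,\dots\}$, $\mathbb{Z}_0^-=\{0,-1,-2,\dots\}$. For $a\in\mathbb{C}$ and $n\in\mathbb{N}_0$, $(a)_0=1$ and $(a)_n=a(a+1)\cdots(a+n-1)$. For $N\in\mathbb{N}_0$, ${}_3F_2\left[\begin{array}{r} a_1,a_2,a_3;\\ b_1,b_2;\end{array}z\right]_N=\sum_{n=0}^{N}\frac{(a_1)_n(a_2)_n(a_3)_n}{(b_1)_n(b_2)_n}\frac{z^n}{n!}$ (the sum of the first $N+1$ terms), defined whenever $(b_1)_n(b_2)_n\neq0$ for $0\le n\le N$. *)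

theory Defs
  imports Complex_Main
begin

definition nonpos_ints_c :: "complex set" where
  "nonpos_ints_c = {z. \<exists>n::nat. z = - of_nat n}"

definition hyp3F2_trunc ::
  "complex \<Rightarrow> complex \<Rightarrow> complex \<Rightarrow> complex \<Rightarrow> complex \<Rightarrow> complex \<Rightarrow> nat \<Rightarrow> complex" where
  "hyp3F2_trunc a1 a2 a3 b1 b2 z N =
     (\<Sum>n=0..N. pochhammer a1 n * pochhammer a2 n * pochhammer a3 n
        / (pochhammer b1 n * pochhammer b2 n) * z ^ n / of_nat (fact n))"

end

theory Submission
  imports Defs
begin

lemma np_add: "(c::complex) \<notin> nonpos_ints_c \<Longrightarrow> c + of_nat j \<noteq> 0"
proof
  assume "c \<notin> nonpos_ints_c" "c + of_nat j = 0"
  then have "c = - of_nat j" by (simp add: eq_neg_iff_add_eq_0)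
  then show False using \<open>c \<notin> nonpos_ints_c\<close> unfolding nonpos_ints_c_def by auto
qed

lemma np_poch: "(c::complex) \<notin> nonpos_ints_c \<Longrightarrow> pochhammer c n \<noteq> 0"
  unfolding nonpos_ints_c_def by (auto simp: pochhammer_eq_0_iff)

lemma negN_poch: "n \<le> N \<Longrightarrow> pochhammer (- of_nat N :: complex) n \<noteq> 0"
  by (auto simp: pochhammer_eq_0_iff)

lemma shift2: "pochhammer (a::complex) n * (a + of_nat n) * (a + of_nat n + 1) = a * (a+1) * pochhammer (a+2) n"
proof -
  have "pochhammer a (Suc (Suc n)) = pochhammer a n * (a + of_nat n) * (a + of_nat n + 1)"
    by (simp add: pochhammer_Suc algebra_simps)
  moreover have "pochhammer a (2 + n) = a * (a+1) * pochhammer (a+2) n"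
  proof -
    have "pochhammer a (2 + n) = pochhammer a 2 * pochhammer (a + of_nat 2) n"
      by (rule pochhammer_product')
    moreover have "pochhammer a 2 = a * (a+1)"
      by (simp add: numeral_2_eq_2 pochhammer_Suc)
    ultimately show ?thesis by simp
  qed
  ultimately show ?thesis by simp
qed

definition T :: "complex \<Rightarrow> nat \<Rightarrow> nat \<Rightarrow> nat \<Rightarrow> complex" where
  "T c m k n = pochhammer (- 2*of_nat m) n * pochhammer (1 + 2*of_nat m) n * pochhammer c n
        / (pochhammer (- 2*of_nat m - 2*of_nat k) n * pochhammer (2*c + 2*of_nat m + 2*of_nat k + 1) n) * 1 ^ n / of_nat (fact n)"

lemma FH: "T c m (k+1) n * ((of_nat n + 2*of_nat m+1)*(of_nat n+2*of_nat m+2))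
   = T c (Suc m) k n * ((of_nat n - 2*of_nat m - 1)*(of_nat n - 2*of_nat m - 2))"
proof -
  define X where "X = pochhammer (- 2*of_nat m :: complex) n"
  define Y where "Y = pochhammer (1 + 2*of_nat m :: complex) n"
  define X' where "X' = pochhammer (- 2*of_nat (Suc m) :: complex) n"
  define Y' where "Y' = pochhammer (1 + 2*of_nat (Suc m) :: complex) n"
  define D where "D = pochhammer (- 2*of_nat m - 2*of_nat (k+1)) n * pochhammer (2*c + 2*of_nat m + 2*of_nat (k+1) + 1) n"
  define D' where "D' = pochhammer (- 2*of_nat (Suc m) - 2*of_nat k) n * pochhammer (2*c + 2*of_nat (Suc m) + 2*of_nat k + 1) n"
  have a1: "(- 2*of_nat (Suc m) - 2*of_nat k :: complex) = - 2*of_nat m - 2*of_nat (k+1)"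
    by (simp add: algebra_simps)
  have a2: "(2*c + 2*of_nat (Suc m) + 2*of_nat k + 1 :: complex) = 2*c + 2*of_nat m + 2*of_nat (k+1) + 1"
    by (simp add: algebra_simps)
  have DD: "D' = D" unfolding D_def D'_def a1 a2 by simp
  have e1: "X' * (of_nat n - 2*of_nat m - 2) * (of_nat n - 2*of_nat m - 1) = (2*of_nat m + 2) * (2*of_nat m + 1) * X"
    using shift2[of "- 2*of_nat (Suc m)" n] unfolding X_def X'_def by (simp add: algebra_simps)
  have e2: "Y * (of_nat n + 2*of_nat m + 1) * (of_nat n + 2*of_nat m + 2) = (2*of_nat m + 1) * (2*of_nat m + 2) * Y'"
    using shift2[of "1 + 2*of_nat m" n] unfolding Y_def Y'_def by (simp add: algebra_simps)
  have key: "X * Y * ((of_nat n + 2*of_nat m+1)*(of_nat n+2*of_nat m+2)) = X' * Y' * ((of_nat n - 2*of_nat m - 1)*(of_nat n - 2*of_nat m - 2))"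
  proof -
    have "X * Y * ((of_nat n + 2*of_nat m+1)*(of_nat n+2*of_nat m+2)) = X * (Y * (of_nat n + 2*of_nat m + 1) * (of_nat n + 2*of_nat m + 2))"
      by (simp add: mult_ac)
    also have "... = X * ((2*of_nat m + 1) * (2*of_nat m + 2) * Y')"
      by (simp only: e2)
    also have "... = ((2*of_nat m + 2) * (2*of_nat m + 1) * X) * Y'" by (simp add: algebra_simps)
    also have "... = (X' * (of_nat n - 2*of_nat m - 2) * (of_nat n - 2*of_nat m - 1)) * Y'"
      by (simp only: e1)
    also have "... = X' * Y' * ((of_nat n - 2*of_nat m - 1)*(of_nat n - 2*of_nat m - 2))"
      by (simp add: mult_ac)
    finally show ?thesis .
  qed
  have "T c m (k+1) n = X * Y * pochhammer c n / D / of_nat (fact n)"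
    unfolding T_def X_def Y_def D_def by simp
  moreover have "T c (Suc m) k n = X' * Y' * pochhammer c n / D / of_nat (fact n)"
    unfolding T_def X'_def Y'_def DD[symmetric] D'_def by simp
  ultimately show ?thesis
  proof -
    assume h1: "T c m (k+1) n = X * Y * pochhammer c n / D / of_nat (fact n)"
      and h2: "T c (Suc m) k n = X' * Y' * pochhammer c n / D / of_nat (fact n)"
    have "T c m (k+1) n * ((of_nat n + 2*of_nat m+1)*(of_nat n+2*of_nat m+2))
       = (X * Y * ((of_nat n + 2*of_nat m+1)*(of_nat n+2*of_nat m+2))) * pochhammer c n / D / of_nat (fact n)"
      unfolding h1 by (simp add: mult_ac)
    also have "... = (X' * Y' * ((of_nat n - 2*of_nat m - 1)*(of_nat n - 2*of_nat m - 2))) * pochhammer c n / D / of_nat (fact n)"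
      by (simp only: key)
    also have "... = T c (Suc m) k n * ((of_nat n - 2*of_nat m - 1)*(of_nat n - 2*of_nat m - 2))"
      unfolding h2 by (simp add: mult_ac)
    finally show ?thesis .
  qed
qed

lemma gen_step:
  fixes a b c e d :: complex
  assumes "pochhammer e n \<noteq> 0" "pochhammer d n \<noteq> 0" "e + of_nat n \<noteq> 0" "d + of_nat n \<noteq> 0"
  shows "(pochhammer a (Suc n) * pochhammer b (Suc n) * pochhammer c (Suc n) / (pochhammer e (Suc n) * pochhammer d (Suc n)) * 1^(Suc n) / of_nat (fact (Suc n)))
      * ((e + of_nat n) * (d + of_nat n) * (of_nat n + 1))
    = (pochhammer a n * pochhammer b n * pochhammer c n / (pochhammer e n * pochhammer d n) * 1^n / of_nat (fact n))
      * ((a + of_nat n) * (b + of_nat n) * (c + of_nat n))"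
proof -
  have f: "(of_nat (fact (Suc n)) :: complex) = of_nat (fact n) * (of_nat n + 1)"
    by (simp add: algebra_simps)
  have nz: "(of_nat (fact n) :: complex) \<noteq> 0" "(of_nat n + 1 :: complex) \<noteq> 0"
    by simp (metis of_nat_Suc of_nat_eq_0_iff add.commute nat.distinct(1))
  have fld: "\<And>A B C E D F a' b' c' e' d' q :: complex. E \<noteq> 0 \<Longrightarrow> D \<noteq> 0 \<Longrightarrow> F \<noteq> 0 \<Longrightarrow> e' \<noteq> 0 \<Longrightarrow> d' \<noteq> 0 \<Longrightarrow> q \<noteq> 0 \<Longrightarrow>
     (A*a') * (B*b') * (C*c') / ((E*e') * (D*d')) * 1 / (F*q) * (e' * d' * q) = A * B * C / (E * D) * 1 / F * (a' * b' * c')"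
    by (simp add: field_simps)
  show ?thesis unfolding f pochhammer_Suc power_one using fld assms nz by blast
qed

lemma HH:
  assumes n: "n < 2*m+2*k+2" and d: "2*c + 2*of_nat m + 2*of_nat k + 3 \<notin> nonpos_ints_c"
  shows "T c (Suc m) k (Suc n) * ((of_nat n - of_nat (2*m+2*k+2)) * (of_nat n + (2*c + 2*of_nat m + 2*of_nat k + 3)) * (of_nat n + 1))
     = T c (Suc m) k n * ((of_nat n - 2*of_nat m - 2)*(of_nat n + 2*of_nat m + 3)*(of_nat n + c))"
proof -
  define d where "d = 2*c + 2*of_nat m + 2*of_nat k + 3"
  define N where "N = 2*m+2*k+2"
  have p1: "(- 2*of_nat (Suc m) - 2*of_nat k :: complex) = - of_nat N" unfolding N_def by (simp add: algebra_simps)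
  have p2: "(2*c + 2*of_nat (Suc m) + 2*of_nat k + 1 :: complex) = d" unfolding d_def by (simp add: algebra_simps)
  have nz1: "pochhammer (- of_nat N :: complex) n \<noteq> 0" by (rule negN_poch) (use n N_def in simp)
  have nz2: "pochhammer d n \<noteq> 0" using d d_def np_poch by simp
  have nN: "n \<noteq> N" using n N_def by simp
  have nN': "(of_nat n :: complex) \<noteq> of_nat N" using nN by (simp only: of_nat_eq_iff) simp
  have nz3: "(- of_nat N + of_nat n :: complex) \<noteq> 0" using nN'
    by (metis add.commute diff_conv_add_uminus eq_iff_diff_eq_0)
  have nz4: "d + of_nat n \<noteq> 0" using d d_def np_add by simp
  have st: "T c (Suc m) k (Suc n) * ((- of_nat N + of_nat n) * (d + of_nat n) * (of_nat n + 1))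
     = T c (Suc m) k n * ((- 2*of_nat (Suc m) + of_nat n) * ((1 + 2*of_nat (Suc m)) + of_nat n) * (c + of_nat n))"
    unfolding T_def p1 p2 using gen_step[OF nz1 nz2 nz3 nz4] by simp
  show ?thesis using st unfolding d_def N_def by (simp add: algebra_simps)
qed

lemma ratid:
  fixes x M K c h :: complex
  assumes "x + 2*M + 1 \<noteq> 0" "x + 2*M + 2 \<noteq> 0"
  shows "(2*K+1)*(c+2*M+K+2) * h - (2*c+2*K+1)*(2*M+K+2) * (h * ((x-2*M-1)*(x-2*M-2)) / ((x+2*M+1)*(x+2*M+2)))
    = (4*M+3) * h * (x-2*M-2)*(x+c)/(x+2*M+2) - (4*M+3) * h * x * (x - (2*M+2*K+2) - 1) * (x + (2*c+2*M+2*K+3) - 1) / ((x+2*M+1)*(x+2*M+2))"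
proof -
  define u where "u = x + 2*M + 1"
  have x: "x = u - 2*M - 1" unfolding u_def by simp
  have u0: "u \<noteq> 0" "u + 1 \<noteq> 0" using assms unfolding u_def by (simp_all add: algebra_simps)
  have e: "x + 2*M + 2 = u + 1" unfolding u_def by simp
  define w where "w = u * (u + 1)"
  have w0: "w \<noteq> 0" using u0 unfolding w_def by simp
  have d1: "\<And>a. (a::complex) / w * w = a" using w0 by simp
  have d2: "\<And>a. (a::complex) / (u+1) * w = a * u" using u0 unfolding w_def by simp
  have "((2*K+1)*(c+2*M+K+2) * h - (2*c+2*K+1)*(2*M+K+2) * (h * ((x-2*M-1)*(x-2*M-2)) / w)) * w
    = (2*K+1)*(c+2*M+K+2) * h * w - (2*c+2*K+1)*(2*M+K+2) * (h * ((x-2*M-1)*(x-2*M-2)))"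
    by (simp only: left_diff_distrib times_divide_eq_right d1)
  also have "... = (4*M+3) * h * (x-2*M-2)*(x+c) * u - (4*M+3) * h * x * (x - (2*M+2*K+2) - 1) * (x + (2*c+2*M+2*K+3) - 1)"
    unfolding w_def x by (simp add: algebra_simps)
  also have "... = ((4*M+3) * h * (x-2*M-2)*(x+c)/(u+1) - (4*M+3) * h * x * (x - (2*M+2*K+2) - 1) * (x + (2*c+2*M+2*K+3) - 1) / w) * w"
    by (simp only: left_diff_distrib d1 d2)
  finally have "(2*K+1)*(c+2*M+K+2) * h - (2*c+2*K+1)*(2*M+K+2) * (h * ((x-2*M-1)*(x-2*M-2)) / w)
    = (4*M+3) * h * (x-2*M-2)*(x+c)/(u+1) - (4*M+3) * h * x * (x - (2*M+2*K+2) - 1) * (x + (2*c+2*M+2*K+3) - 1) / w"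
    using w0 by simp
  then show ?thesis unfolding e u_def[symmetric] w_def .
qed

definition G :: "complex \<Rightarrow> nat \<Rightarrow> nat \<Rightarrow> nat \<Rightarrow> complex" where
  "G c m k n = (4*of_nat m+3) * T c (Suc m) k n * of_nat n * (of_nat n - (2*of_nat m+2*of_nat k+2) - 1)
     * (of_nat n + (2*c+2*of_nat m+2*of_nat k+3) - 1) / ((of_nat n + 2*of_nat m+1)*(of_nat n+2*of_nat m+2))"

lemma pos_c: "(of_nat n + of_nat j + 1 :: complex) \<noteq> 0"
  by (metis of_nat_Suc of_nat_add of_nat_eq_0_iff nat.distinct(1) add.commute)

lemma tele:
  assumes n: "n \<le> 2*m+2" and k: "k \<ge> 1" and d: "2*c + 2*of_nat m + 2*of_nat k + 3 \<notin> nonpos_ints_c"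
  shows "(2*of_nat k+1)*(c+2*of_nat m+of_nat k+2) * T c (Suc m) k n - (2*c+2*of_nat k+1)*(2*of_nat m+of_nat k+2) * T c m (k+1) n
     = G c m k (Suc n) - G c m k n"
proof -
  define x where "x = (of_nat n :: complex)"
  define M where "M = (of_nat m :: complex)"
  define K where "K = (of_nat k :: complex)"
  define h where "h = T c (Suc m) k n"
  have u1: "x + 2*M + 1 \<noteq> 0" unfolding x_def M_def using pos_c[of n "2*m"] by simp
  have u2: "x + 2*M + 2 \<noteq> 0" unfolding x_def M_def using pos_c[of n "2*m+1"] by (simp add: algebra_simps)
  have u3: "x + 2*M + 3 \<noteq> 0" unfolding x_def M_def using pos_c[of n "2*m+2"] by (simp add: algebra_simps)
  have F: "T c m (k+1) n = h * ((x-2*M-1)*(x-2*M-2)) / ((x+2*M+1)*(x+2*M+2))"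
    using FH[of c m k n] u1 u2 unfolding h_def x_def M_def by (simp add: eq_divide_eq)
  have HH': "T c (Suc m) k (Suc n) * ((x - (2*M+2*K+2)) * (x + (2*c+2*M+2*K+3)) * (x+1))
     = h * ((x-2*M-2)*(x+2*M+3)*(x+c))"
  proof -
    have "n < 2*m+2*k+2" using n k by simp
    from HH[OF this d] show ?thesis unfolding h_def x_def M_def K_def
      by (simp add: add_ac)
  qed
  have Gs: "G c m k (Suc n) = (4*M+3) * h * (x-2*M-2)*(x+c)/(x+2*M+2)"
  proof -
    have "G c m k (Suc n) = (4*M+3) * (T c (Suc m) k (Suc n) * ((x - (2*M+2*K+2)) * (x + (2*c+2*M+2*K+3)) * (x+1)))
       / ((x+2*M+2)*(x+2*M+3))"
      unfolding G_def x_def M_def K_def by (simp add: algebra_simps)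
    also have "... = (4*M+3) * (h * ((x-2*M-2)*(x+2*M+3)*(x+c))) / ((x+2*M+2)*(x+2*M+3))"
      by (simp only: HH')
    also have "... = ((4*M+3) * h * (x-2*M-2)*(x+c)) * (x+2*M+3) / ((x+2*M+2)*(x+2*M+3))"
      by (simp only: mult_ac)
    also have "... = (4*M+3) * h * (x-2*M-2)*(x+c)/(x+2*M+2)"
      by (rule nonzero_mult_divide_mult_cancel_right[OF u3])
    finally show ?thesis .
  qed
  have G0: "G c m k n = (4*M+3) * h * x * (x - (2*M+2*K+2) - 1) * (x + (2*c+2*M+2*K+3) - 1) / ((x+2*M+1)*(x+2*M+2))"
    unfolding G_def h_def x_def M_def K_def by simp
  show ?thesis
    unfolding Gs G0 F unfolding h_def[symmetric] M_def[symmetric] K_def[symmetric]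
    using ratid[OF u1 u2, of K c h] by simp
qed

lemma T_zero: "n > 2*m \<Longrightarrow> T c m k n = 0"
proof -
  assume "n > 2*m"
  then have "pochhammer (- of_nat (2*m) :: complex) n = 0" by (rule pochhammer_of_nat_eq_0_lemma)
  then show ?thesis unfolding T_def by simp
qed

lemma sumstep:
  assumes k: "k \<ge> 1" and d: "2*c + 2*of_nat m + 2*of_nat k + 3 \<notin> nonpos_ints_c"
  shows "(2*of_nat k+1)*(c+2*of_nat m+of_nat k+2) * (\<Sum>n=0..2*Suc m. T c (Suc m) k n)
       = (2*c+2*of_nat k+1)*(2*of_nat m+of_nat k+2) * (\<Sum>n=0..2*m. T c m (k+1) n)"
proof -
  define A where "A = (2*of_nat k+1)*(c+2*of_nat m+of_nat k+2)"
  define B where "B = (2*c+2*of_nat k+1)*(2*of_nat m+of_nat k+2)"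
  have r1: "{0..2*Suc m} = {..<2*m+3}" by auto
  have r2: "(\<Sum>n<2*m+3. T c m (k+1) n) = (\<Sum>n=0..2*m. T c m (k+1) n)"
  proof -
    have "(\<Sum>n<2*m+3. T c m (k+1) n) = (\<Sum>n<2*m+1. T c m (k+1) n) + T c m (k+1) (2*m+1) + T c m (k+1) (2*m+2)"
      by (simp add: numeral_3_eq_3)
    also have "... = (\<Sum>n<2*m+1. T c m (k+1) n)" by (simp add: T_zero)
    also have "{..<2*m+1} = {0..2*m}" by auto
    finally show ?thesis .
  qed
  have "(\<Sum>n<2*m+3. A * T c (Suc m) k n - B * T c m (k+1) n) = (\<Sum>n<2*m+3. G c m k (Suc n) - G c m k n)"
    by (rule sum.cong) (use tele[OF _ k d] in \<open>auto simp: A_def B_def\<close>)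
  also have "... = G c m k (2*m+3) - G c m k 0" by (rule sum_lessThan_telescope)
  also have "G c m k 0 = 0" unfolding G_def by simp
  also have "G c m k (2*m+3) = 0" unfolding G_def using T_zero[of "Suc m" "2*m+3" c k] by simp
  finally have "A * (\<Sum>n<2*m+3. T c (Suc m) k n) - B * (\<Sum>n<2*m+3. T c m (k+1) n) = 0"
    by (simp add: sum_subtractf sum_distrib_left)
  then show ?thesis unfolding r1 r2 A_def B_def by simp
qed

definition R :: "complex \<Rightarrow> nat \<Rightarrow> nat \<Rightarrow> complex" where
  "R c m k = pochhammer (1 + 2*c + 2*of_nat k) (2*m) * pochhammer (1 + of_nat k) (2*m)
         / (pochhammer (1 + 2*of_nat k) (2*m) * pochhammer (1 + c + of_nat k) (2*m))"

lemma Rstep: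
  assumes c: "c \<notin> nonpos_ints_c"
  shows "(2*of_nat k+1)*(c+2*of_nat m+of_nat k+2) * R c (Suc m) k
       = (2*c+2*of_nat k+1)*(2*of_nat m+of_nat k+2) * R c m (k+1)"
proof -
  define K where "K = (of_nat k :: complex)"
  define M where "M = (of_nat m :: complex)"
  define p1 where "p1 = pochhammer (1 + 2*c + 2*of_nat (k+1)) (2*m)"
  define p2 where "p2 = pochhammer (1 + of_nat (k+1) :: complex) (2*m)"
  define p3 where "p3 = pochhammer (1 + 2*of_nat (k+1) :: complex) (2*m)"
  define p4 where "p4 = pochhammer (1 + c + of_nat (k+1)) (2*m)"
  have ss: "2 * Suc m = Suc (Suc (2*m))" by simp
  have q1: "pochhammer (1 + 2*c + 2*K) (2 * Suc m) = (1+2*c+2*K)*(2+2*c+2*K)*p1"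
    unfolding ss pochhammer_rec p1_def K_def by (simp add: algebra_simps)
  have q2: "pochhammer (1 + K) (2 * Suc m) = (1+K)*(2+K+2*M)*p2"
  proof -
    have "pochhammer (1+K) (2 * Suc m) = (1+K) * pochhammer (1+K+1) (Suc (2*m))"
      unfolding ss by (rule pochhammer_rec)
    also have "pochhammer (1+K+1) (Suc (2*m)) = pochhammer (1+K+1) (2*m) * (1+K + 1 + of_nat (2*m))"
      by (rule pochhammer_Suc)
    finally show ?thesis unfolding p2_def K_def M_def by (simp add: algebra_simps)
  qed
  have q3: "pochhammer (1 + 2*K) (2 * Suc m) = (1+2*K)*(2+2*K)*p3"
    unfolding ss pochhammer_rec p3_def K_def by (simp add: algebra_simps)
  have q4: "pochhammer (1 + c + K) (2 * Suc m) = (1+c+K)*(2+c+K+2*M)*p4"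
  proof -
    have "pochhammer (1+c+K) (2 * Suc m) = (1+c+K) * pochhammer (1+c+K+1) (Suc (2*m))"
      unfolding ss by (rule pochhammer_rec)
    also have "pochhammer (1+c+K+1) (Suc (2*m)) = pochhammer (1+c+K+1) (2*m) * (1+c+K + 1 + of_nat (2*m))"
      by (rule pochhammer_Suc)
    finally show ?thesis unfolding p4_def K_def M_def by (simp add: algebra_simps)
  qed
  have n1: "1 + 2*K \<noteq> 0" "2 + 2*K \<noteq> 0" unfolding K_def using pos_c[of 0 "2*k"] pos_c[of 0 "2*k+1"]
    by (simp_all add: algebra_simps)
  have n2: "1 + c + K \<noteq> 0" "2 + c + K + 2*M \<noteq> 0" unfolding K_def M_def
    using np_add[OF c, of "k+1"] np_add[OF c, of "k+2+2*m"] by (simp_all add: algebra_simps)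
  have n3: "p3 \<noteq> 0"
  proof -
    have e: "(1 + 2*of_nat (k+1) :: complex) = of_nat (2*k+3)" by simp
    have "pochhammer (2*k+3) (2*m) > (0::nat)" by (rule pochhammer_pos) simp
    then show ?thesis unfolding p3_def e pochhammer_of_nat by simp
  qed
  have n4: "p4 \<noteq> 0" unfolding p4_def
  proof (rule np_poch)
    show "1 + c + of_nat (k+1) \<notin> nonpos_ints_c"
    proof
      assume "1 + c + of_nat (k+1) \<in> nonpos_ints_c"
      then obtain j where "1 + c + of_nat (k+1) = - of_nat j" unfolding nonpos_ints_c_def by auto
      then have "c = - of_nat (j + k + 2)" by (simp add: algebra_simps)
      then show False using c unfolding nonpos_ints_c_def by blast
    qed
  qed
  have fld: "\<And>P1 P2 P3 P4. P3 \<noteq> 0 \<Longrightarrow> P4 \<noteq> 0 \<Longrightarrow>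
      (2*K+1)*(c+2*M+K+2) * (((1+2*c+2*K)*(2+2*c+2*K)*P1) * ((1+K)*(2+K+2*M)*P2) / (((1+2*K)*(2+2*K)*P3) * ((1+c+K)*(2+c+K+2*M)*P4)))
      = (2*c+2*K+1)*(2*M+K+2) * (P1 * P2 / (P3 * P4))"
  proof -
    fix P1 P2 P3 P4 :: complex
    define num where "num = (1+2*c+2*K)*(2+2*c+2*K)*((1+K)*(2+K+2*M))"
    define den where "den = (1+2*K)*(2+2*K)*((1+c+K)*(2+c+K+2*M))"
    have den0: "den \<noteq> 0" unfolding den_def using n1 n2 by simp
    have r: "((1+2*c+2*K)*(2+2*c+2*K)*P1) * ((1+K)*(2+K+2*M)*P2) / (((1+2*K)*(2+2*K)*P3) * ((1+c+K)*(2+c+K+2*M)*P4))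
       = (P1 * P2 / (P3 * P4)) * (num / den)"
      unfolding num_def den_def by (simp only: times_divide_times_eq mult_ac)
    have AQ: "(2*K+1)*(c+2*M+K+2) * (num / den) = (2*c+2*K+1)*(2*M+K+2)"
    proof -
      have "(2*K+1)*(c+2*M+K+2) * num = (2*c+2*K+1)*(2*M+K+2) * den"
        unfolding num_def den_def by (simp add: algebra_simps)
      then show ?thesis using den0 by (simp add: times_divide_eq_right divide_eq_eq)
    qed
    show "(2*K+1)*(c+2*M+K+2) * (((1+2*c+2*K)*(2+2*c+2*K)*P1) * ((1+K)*(2+K+2*M)*P2) / (((1+2*K)*(2+2*K)*P3) * ((1+c+K)*(2+c+K+2*M)*P4)))
      = (2*c+2*K+1)*(2*M+K+2) * (P1 * P2 / (P3 * P4))"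
      unfolding r using AQ by (metis mult.assoc mult.commute)
  qed
  have "R c (Suc m) k = ((1+2*c+2*K)*(2+2*c+2*K)*p1) * ((1+K)*(2+K+2*M)*p2) / (((1+2*K)*(2+2*K)*p3) * ((1+c+K)*(2+c+K+2*M)*p4))"
    unfolding R_def K_def[symmetric] q1 q2 q3 q4 by simp
  moreover have "R c m (k+1) = p1 * p2 / (p3 * p4)" unfolding R_def p1_def p2_def p3_def p4_def by simp
  ultimately show ?thesis using fld[OF n3 n4] unfolding K_def M_def by simp
qed

lemma main_ind:
  assumes c: "c \<notin> nonpos_ints_c"
  shows "\<forall>k. k \<ge> 1 \<longrightarrow> 2*c + 2*of_nat m + 2*of_nat k + 1 \<notin> nonpos_ints_c \<longrightarrow>
           (\<Sum>n=0..2*m. T c m k n) = R c m k"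
proof (induction m)
  case 0
  show ?case by (simp add: T_def R_def)
next
  case (Suc m)
  show ?case
  proof (intro allI impI)
    fix k :: nat
    assume k: "k \<ge> 1" and d0: "2*c + 2*of_nat (Suc m) + 2*of_nat k + 1 \<notin> nonpos_ints_c"
    have e1: "2*c + 2*of_nat m + 2*of_nat (k+1) + 1 = 2*c + 2*of_nat (Suc m) + 2*of_nat k + 1"
      by (simp add: algebra_simps)
    have e2: "2*c + 2*of_nat m + 2*of_nat k + 3 = 2*c + 2*of_nat (Suc m) + 2*of_nat k + 1"
      by (simp add: algebra_simps)
    have IH: "(\<Sum>n=0..2*m. T c m (k+1) n) = R c m (k+1)"
      using Suc.IH d0 unfolding e1 by simp
    have S: "(2*of_nat k+1)*(c+2*of_nat m+of_nat k+2) * (\<Sum>n=0..2*Suc m. T c (Suc m) k n)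
       = (2*c+2*of_nat k+1)*(2*of_nat m+of_nat k+2) * (\<Sum>n=0..2*m. T c m (k+1) n)"
      by (rule sumstep[OF k]) (unfold e2, rule d0)
    have A0: "(2*of_nat k+1)*(c+2*of_nat m+of_nat k+2) \<noteq> 0"
    proof -
      have "(2*of_nat k+1 :: complex) \<noteq> 0" using pos_c[of 0 "2*k"] by simp
      moreover have "c+2*of_nat m+of_nat k+2 \<noteq> 0" using np_add[OF c, of "2*m+k+2"] by (simp add: algebra_simps)
      ultimately show ?thesis by simp
    qed
    have "(2*of_nat k+1)*(c+2*of_nat m+of_nat k+2) * (\<Sum>n=0..2*Suc m. T c (Suc m) k n)
        = (2*of_nat k+1)*(c+2*of_nat m+of_nat k+2) * R c (Suc m) k"
      unfolding S IH Rstep[OF c] ..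
    then show "(\<Sum>n=0..2*Suc m. T c (Suc m) k n) = R c (Suc m) k" using A0 by simp
  qed
qed

theorem mainTheorem6:
  fixes m k :: nat and \<beta> :: complex
  assumes "m \<ge> 1" and "k \<ge> 1"
    and "\<beta> \<notin> nonpos_ints_c"
    and "2*\<beta> + 2*of_nat m + 2*of_nat k + 1 \<notin> nonpos_ints_c"
  shows "hyp3F2_trunc (- 2*of_nat m) (1 + 2*of_nat m) \<beta>
           (- 2*of_nat m - 2*of_nat k) (2*\<beta> + 2*of_nat m + 2*of_nat k + 1) 1 (2*m)
       = pochhammer (1 + 2*\<beta> + 2*of_nat k) (2*m) * pochhammer (1 + of_nat k) (2*m)
         / (pochhammer (1 + 2*of_nat k) (2*m) * pochhammer (1 + \<beta> + of_nat k) (2*m))"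
proof -
  have "(\<Sum>n=0..2*m. T \<beta> m k n) = R \<beta> m k"
    using main_ind[OF assms(3), of m] assms(2,4) by blast
  then show ?thesis unfolding hyp3F2_trunc_def T_def R_def .
qed

end
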